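(* Let $G$ be a finite group, $n\ge 1$, and let $F$ be a $2$-starter under $G$ with $G$-stabilizer $S$. Let $H$ be the subgraph of $K_{\overline{G\times\mathbb{Z}_n}}$ with edge set $$\{[\infty,(x,k)] : x\sim\infty \text{ in } F,\ k\in\mathbb{Z}_n\}\ \cup\ \{[(x,k),(x,r)] : x\sim\infty \text{ in } F,\ k,r\in\mathbb{Z}_n,\ k\neq r\}\ \cup\ \{[(x,k),(y,r)] : x\sim y \text{ in } F,\ x,y\in G,\ k,r\in\mathbb{Z}_n\}.$$ Then $H$ is a $2n$-factor of $K_{\overline{G\times\mathbb{Z}_n}}$, its $(G\times\mathbb{Z}_n)$-stabilizer is exactly $S\times\mathbb{Z}_n$, and $H$ is a $2n$-starter under $G\times\mathbb{Z}_n$.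
   Context: For a finite group $G$, $\overline{G}=G\cup\{\infty\}$, and $K_V$ denotes the complete graph on vertex set $V$; $u\sim v$ means $u$ is adjacent to $v$, and $[u,v]$ denotes an edge. $G$ acts on $\overline{G}$ by right multiplication, with $\infty g=\infty$; for a subgraph $F$ of $K_{\overline{G}}$ and $g\in G$, $Fg$ is the graph obtained by replacing every vertex $v$ by $vg$, and the $G$-stabilizer of $F$ is $\{g\in G: Fg=F\}$. A $k$-factor of $K_V$ is a spanning $k$-regular subgraph. For a graph $\Gamma$ with vertex set $\overline{G}$, its list of differences is the multiset $\Delta\Gamma=\{ab^{-1},\ ba^{-1} : [a,b]\in E(\Gamma),\ a\neq\infty\neq b\}$. Given a finite group $G$ with $k$ dividing $|G|$, a $k$-factor $F$ of $K_{\overline{G}}$ is a $k$-starter under $G$ if (1) the $G$-stabilizer of $F$ has order $k$, and (2) $\Delta F$ contains every element of $G\setminus\{1_G\}$. In $G\times\mathbb{Z}_n$ the group operation is $(g,i)(h,j)=(gh,i+j)$, and $G\times \mathbb{Z}_n$ acts on $\overline{G\times\mathbb{Z}_n}$ by right multiplication fixing $\infty$. *)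

theory Defs
  imports "HOL-Algebra.Elementary_Groups"
begin

text \<open>The extended vertex set G-bar = G with an extra point infinity; we model
  G-bar as a subset of the option type, with None playing the role of infinity.\<close>

definition ext_vertices :: "('a, 'm) monoid_scheme \<Rightarrow> 'a option set" where
  "ext_vertices G = Some ` carrier G \<union> {None}"

text \<open>A (simple) graph with vertex set V is given by its edge set: a set of
  two-element subsets of V.  A subgraph of the complete graph K_V is thus an
  edge set all of whose edges are 2-subsets of V.\<close>

definition is_graph_on :: "'v set \<Rightarrow> 'v set set \<Rightarrow> bool" where
  "is_graph_on V E \<longleftrightarrow> (\<forall>e\<in>E. \<exists>u v. u \<in> V \<and> v \<in> V \<and> u \<noteq> v \<and> e = {u, v})"

definition is_k_factor :: "'v set \<Rightarrow> nat \<Rightarrow> 'v set set \<Rightarrow> bool" where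
  "is_k_factor V k E \<longleftrightarrow> is_graph_on V E \<and> (\<forall>u\<in>V. card {v. {u, v} \<in> E} = k)"

definition vact :: "('a, 'm) monoid_scheme \<Rightarrow> 'a option \<Rightarrow> 'a \<Rightarrow> 'a option" where
  "vact G v g = map_option (\<lambda>x. x \<otimes>\<^bsub>G\<^esub> g) v"

definition gact :: "('a, 'm) monoid_scheme \<Rightarrow> 'a option set set \<Rightarrow> 'a \<Rightarrow> 'a option set set" where
  "gact G E g = (\<lambda>e. (\<lambda>v. vact G v g) ` e) ` E"

definition graph_stabilizer :: "('a, 'm) monoid_scheme \<Rightarrow> 'a option set set \<Rightarrow> 'a set" where
  "graph_stabilizer G E = {g \<in> carrier G. gact G E g = E}"

text \<open>The (underlying set of the) list of differences: all a b^{-1} and b a^{-1}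
  for edges [a,b] with a, b finite.  Since the edge {a,b} is unordered, both
  orientations are covered by quantifying over a and b.\<close>

definition differences :: "('a, 'm) monoid_scheme \<Rightarrow> 'a option set set \<Rightarrow> 'a set" where
  "differences G E = {a \<otimes>\<^bsub>G\<^esub> inv\<^bsub>G\<^esub> b | a b. {Some a, Some b} \<in> E \<and> a \<noteq> b}"

definition is_k_starter :: "('a, 'm) monoid_scheme \<Rightarrow> nat \<Rightarrow> 'a option set set \<Rightarrow> bool" where
  "is_k_starter G k F \<longleftrightarrow>
     group G \<and> finite (carrier G) \<and> k dvd card (carrier G) \<and>
     is_k_factor (ext_vertices G) k F \<and>
     card (graph_stabilizer G F) = k \<and>
     carrier G - {\<one>\<^bsub>G\<^esub>} \<subseteq> differences G F"

end

theory Submission imports Defs begin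

lemma graph_edge:
  assumes "is_graph_on V E" "{u,v} \<in> E"
  shows "u \<in> V \<and> v \<in> V \<and> u \<noteq> v"
proof -
  obtain a b where "a \<in> V" "b \<in> V" "a \<noteq> b" "{u,v} = {a,b}"
    using assms unfolding is_graph_on_def by blast
  then have "(u = a \<and> v = b) \<or> (u = b \<and> v = a)" by (simp add: doubleton_eq_iff)
  then show ?thesis using \<open>a \<in> V\<close> \<open>b \<in> V\<close> \<open>a \<noteq> b\<close> by blast
qed

lemma graph_edge_sub:
  assumes "is_graph_on V E" "e \<in> E" shows "e \<subseteq> V"
proof -
  obtain a b where "a \<in> V" "b \<in> V" "e = {a,b}"
    using assms unfolding is_graph_on_def by meson
  then show ?thesis by simp
qed

lemma gact_mono: "E \<subseteq> E' \<Longrightarrow> gact K E g \<subseteq> gact K E' g"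
  unfolding gact_def by (rule image_mono)

lemma gact_comp:
  assumes "group K" "is_graph_on (ext_vertices K) E" "g \<in> carrier K" "h \<in> carrier K"
  shows "gact K (gact K E g) h = gact K E (g \<otimes>\<^bsub>K\<^esub> h)"
proof -
  have *: "(\<lambda>x. vact K (vact K x g) h) ` e = (\<lambda>v. vact K v (g \<otimes>\<^bsub>K\<^esub> h)) ` e" if "e \<in> E" for e
  proof -
    have "e \<subseteq> ext_vertices K" using graph_edge_sub[OF assms(2) that] .
    then show ?thesis
    proof (intro image_cong refl)
      fix x assume "x \<in> e"
      with \<open>e \<subseteq> ext_vertices K\<close> have "x = None \<or> (\<exists>a \<in> carrier K. x = Some a)"
        unfolding ext_vertices_def by blast
      then show "vact K (vact K x g) h = vact K x (g \<otimes>\<^bsub>K\<^esub> h)"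
        using monoid.m_assoc[OF group.is_monoid[OF assms(1)]] assms(3,4) by (auto simp: vact_def)
    qed
  qed
  have "gact K (gact K E g) h = (\<lambda>e. (\<lambda>x. vact K (vact K x g) h) ` e) ` E"
    by (simp add: gact_def image_image)
  also have "\<dots> = gact K E (g \<otimes>\<^bsub>K\<^esub> h)" unfolding gact_def
    by (rule image_cong[OF refl]) (rule *)
  finally show ?thesis .
qed

lemma gact_one:
  assumes "group K" "is_graph_on (ext_vertices K) E"
  shows "gact K E \<one>\<^bsub>K\<^esub> = E"
proof -
  have "(\<lambda>v. vact K v \<one>\<^bsub>K\<^esub>) ` e = e" if "e \<in> E" for e
  proof -
    have "e \<subseteq> ext_vertices K" using graph_edge_sub[OF assms(2) that] .
    then have "(\<lambda>v. vact K v \<one>\<^bsub>K\<^esub>) ` e = id ` e"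
    proof (intro image_cong refl)
      fix x assume "x \<in> e"
      with \<open>e \<subseteq> ext_vertices K\<close> have "x = None \<or> (\<exists>a \<in> carrier K. x = Some a)"
        unfolding ext_vertices_def by blast
      then show "vact K x \<one>\<^bsub>K\<^esub> = id x"
        using monoid.r_one[OF group.is_monoid[OF assms(1)]] by (auto simp: vact_def)
    qed
    then show ?thesis by simp
  qed
  then show ?thesis unfolding gact_def by force
qed

lemma gact_eq:
  assumes "group K" "is_graph_on (ext_vertices K) E" "g \<in> carrier K"
    "gact K E g \<subseteq> E" "gact K E (inv\<^bsub>K\<^esub> g) \<subseteq> E"
  shows "gact K E g = E"
proof
  show "gact K E g \<subseteq> E" by fact
  have "gact K (gact K E (inv\<^bsub>K\<^esub> g)) g = gact K E (inv\<^bsub>K\<^esub> g \<otimes>\<^bsub>K\<^esub> g)"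
    by (rule gact_comp[OF assms(1,2) group.inv_closed[OF assms(1,3)] assms(3)])
  also have "\<dots> = E" using assms(1,2,3) by (simp add: gact_one group.l_inv)
  finally have "E = gact K (gact K E (inv\<^bsub>K\<^esub> g)) g" by simp
  also have "\<dots> \<subseteq> gact K E g" by (rule gact_mono) fact
  finally show "E \<subseteq> gact K E g" .
qed

lemma gact_inv:
  assumes "group K" "is_graph_on (ext_vertices K) E" "g \<in> carrier K" "gact K E g = E"
  shows "gact K E (inv\<^bsub>K\<^esub> g) = E"
proof -
  have "gact K E (inv\<^bsub>K\<^esub> g) = gact K (gact K E g) (inv\<^bsub>K\<^esub> g)" using assms by simp
  also have "\<dots> = gact K E (g \<otimes>\<^bsub>K\<^esub> inv\<^bsub>K\<^esub> g)"
    by (rule gact_comp[OF assms(1,2,3) group.inv_closed[OF assms(1,3)]])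
  also have "\<dots> = E" using assms by (simp add: gact_one group.r_inv)
  finally show ?thesis .
qed


lemma gact_sub_iff:
  assumes "is_graph_on V E"
  shows "gact K E g \<subseteq> E \<longleftrightarrow> (\<forall>u v. {u,v} \<in> E \<longrightarrow> {vact K u g, vact K v g} \<in> E)"
proof
  assume h: "gact K E g \<subseteq> E"
  show "\<forall>u v. {u,v} \<in> E \<longrightarrow> {vact K u g, vact K v g} \<in> E"
  proof (intro allI impI)
    fix u v assume "{u,v} \<in> E"
    then have "(\<lambda>w. vact K w g) ` {u,v} \<in> gact K E g" unfolding gact_def by (rule imageI)
    then show "{vact K u g, vact K v g} \<in> E" using h by auto
  qed
next
  assume h: "\<forall>u v. {u,v} \<in> E \<longrightarrow> {vact K u g, vact K v g} \<in> E"
  show "gact K E g \<subseteq> E"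
  proof
    fix e assume "e \<in> gact K E g"
    then obtain e0 where "e0 \<in> E" "e = (\<lambda>w. vact K w g) ` e0" unfolding gact_def by blast
    moreover from \<open>e0 \<in> E\<close> assms obtain a b where "e0 = {a,b}" unfolding is_graph_on_def by meson
    ultimately show "e \<in> E" using h by simp
  qed
qed

definition HH :: "('a, 'm) monoid_scheme \<Rightarrow> nat \<Rightarrow> 'a option set set \<Rightarrow> ('a \<times> int) option set set" where
  "HH G n F =
      {{None, Some (x, k)} | x k. {Some x, None} \<in> F \<and> k \<in> carrier (integer_mod_group n)}
      \<union> {{Some (x, k), Some (x, r)} | x k r. {Some x, None} \<in> F \<and>
           k \<in> carrier (integer_mod_group n) \<and> r \<in> carrier (integer_mod_group n) \<and> k \<noteq> r}
      \<union> {{Some (x, k), Some (y, r)} | x y k r. {Some x, Some y} \<in> F \<and>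
           x \<in> carrier G \<and> y \<in> carrier G \<and>
           k \<in> carrier (integer_mod_group n) \<and> r \<in> carrier (integer_mod_group n)}"

lemma modc: fixes k r t :: int assumes "0 \<le> k" "k < int n" "0 \<le> r" "r < int n" "(k+t) mod int n = (r+t) mod int n" shows "k = r"
proof -
  have "int n dvd (k+t) - (r+t)" using assms(5) mod_eq_dvd_iff by blast
  then have "int n dvd k - r" by simp
  then obtain q where q: "k - r = int n * q" by (auto simp: dvd_def)
  show ?thesis
  proof (cases "q = 0")
    case True then show ?thesis using q by simp
  next
    case False
    then have "\<bar>int n * q\<bar> \<ge> int n" by (simp add: abs_mult mult_le_cancel_left1, linarith)
    then show ?thesis using q assms by linarith
  qed
qed

locale T7 =
  fixes G :: "('a, 'm) monoid_scheme" and n :: nat and F :: "'a option set set"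
  assumes grp: "group G" and fin: "finite (carrier G)" and n1: "n \<ge> 1"
    and st: "is_k_starter G 2 F"
begin

abbreviation "C \<equiv> carrier (integer_mod_group n)"
abbreviation "H \<equiv> HH G n F"
abbreviation "V \<equiv> ext_vertices G"
definition "A = {x. {Some x, None} \<in> F}"
definition "N x = {y. {Some x, Some y} \<in> F}"

lemma C_eq: "C = {0..<int n}" using n1 by (simp add: carrier_integer_mod_group)

lemma graphF: "is_graph_on V F" using st unfolding is_k_starter_def is_k_factor_def by blast

lemma F_edge: "{u,v} \<in> F \<Longrightarrow> u \<in> V \<and> v \<in> V \<and> u \<noteq> v"
  using graph_edge[OF graphF] .

lemma F_sym: "{u,v} \<in> F \<Longrightarrow> {v,u} \<in> F" by (simp add: insert_commute)

lemma degF: "u \<in> V \<Longrightarrow> card {v. {u,v} \<in> F} = 2"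
  using st unfolding is_k_starter_def is_k_factor_def by blast

lemma A_sub: "A \<subseteq> carrier G"
proof
  fix x assume "x \<in> A"
  then have "Some x \<in> V" using F_edge unfolding A_def by blast
  then show "x \<in> carrier G" unfolding ext_vertices_def by auto
qed

lemma N_sub: "N x \<subseteq> carrier G" and N_not: "x \<notin> N x" and N_sub2: "N x \<noteq> {} \<Longrightarrow> x \<in> carrier G"
proof -
  show "N x \<subseteq> carrier G"
  proof
    fix y assume "y \<in> N x"
    then have "Some y \<in> V" using F_edge unfolding N_def by blast
    then show "y \<in> carrier G" unfolding ext_vertices_def by auto
  qed
  show "x \<notin> N x" using F_edge unfolding N_def by blast
  show "N x \<noteq> {} \<Longrightarrow> x \<in> carrier G"
  proof -
    assume "N x \<noteq> {}"
    then obtain y where "y \<in> N x" by blast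
    then have "Some x \<in> V" using F_edge unfolding N_def by blast
    then show "x \<in> carrier G" unfolding ext_vertices_def by auto
  qed
qed

lemma finA: "finite A" using A_sub fin finite_subset by blast
lemma finN: "finite (N x)" using N_sub fin finite_subset by blast

lemma nbF_None: "{v. {None,v} \<in> F} = Some ` A"
proof (rule Set.set_eqI)
  fix v show "v \<in> {v. {None,v} \<in> F} \<longleftrightarrow> v \<in> Some ` A"
  proof (cases v)
    case None then show ?thesis using F_edge[of None None] by auto
  next
    case (Some y) then show ?thesis by (auto simp: A_def insert_commute)
  qed
qed

lemma cardA: "card A = 2"
proof -
  have "None \<in> V" by (simp add: ext_vertices_def)
  then have "card (Some ` A) = 2" using degF nbF_None by metis
  then show ?thesis by (simp add: card_image)
qed

lemma nbF_Some: "{v. {Some x,v} \<in> F} = (if x \<in> A then {None} else {}) \<union> Some ` N x"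
proof (rule Set.set_eqI)
  fix v show "v \<in> {v. {Some x,v} \<in> F} \<longleftrightarrow> v \<in> (if x \<in> A then {None} else {}) \<union> Some ` N x"
  proof (cases v)
    case None then show ?thesis by (auto simp: A_def)
  next
    case (Some y) then show ?thesis by (auto simp: N_def)
  qed
qed

lemma cardN: "x \<in> carrier G \<Longrightarrow> card (N x) = (if x \<in> A then 1 else 2)"
proof -
  assume "x \<in> carrier G"
  then have "Some x \<in> V" by (simp add: ext_vertices_def)
  then have "card ((if x \<in> A then {None} else {}) \<union> Some ` N x) = 2" using degF nbF_Some by metis
  moreover have "card ((if x \<in> A then {None} else {}) \<union> Some ` N x) = (if x \<in> A then 1 else 0) + card (N x)"
    using finN by (subst card_Un_disjoint) (auto simp: card_image)
  ultimately show ?thesis by auto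
qed


lemma H_NN: "{None} \<notin> H"
  unfolding HH_def by (auto simp: doubleton_eq_iff)

lemma H_NS: "{None, Some (y,r)} \<in> H \<longleftrightarrow> y \<in> A \<and> r \<in> C"
  unfolding HH_def A_def by (auto simp: doubleton_eq_iff)

lemma H_SN: "{Some (y,r), None} \<in> H \<longleftrightarrow> y \<in> A \<and> r \<in> C"
  using H_NS by (simp add: insert_commute)

lemma H_SS: "{Some (x,k), Some (y,r)} \<in> H \<longleftrightarrow> k \<in> C \<and> r \<in> C \<and> ((x = y \<and> x \<in> A \<and> k \<noteq> r) \<or> y \<in> N x)"
proof
  assume "{Some (x,k), Some (y,r)} \<in> H"
  then show "k \<in> C \<and> r \<in> C \<and> ((x = y \<and> x \<in> A \<and> k \<noteq> r) \<or> y \<in> N x)"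
    unfolding HH_def A_def N_def by (auto simp: doubleton_eq_iff insert_commute)
next
  assume h: "k \<in> C \<and> r \<in> C \<and> ((x = y \<and> x \<in> A \<and> k \<noteq> r) \<or> y \<in> N x)"
  show "{Some (x,k), Some (y,r)} \<in> H"
  proof (cases "y \<in> N x")
    case True
    then have "x \<in> carrier G" "y \<in> carrier G" using N_sub N_sub2 by auto
    with True h show ?thesis unfolding HH_def N_def by blast
  next
    case False
    with h show ?thesis unfolding HH_def A_def by blast
  qed
qed


abbreviation "P \<equiv> G \<times>\<times> integer_mod_group n"

lemma VP: "ext_vertices P = Some ` (carrier G \<times> C) \<union> {None}"
  by (simp add: ext_vertices_def)

lemma cardC: "card C = n" using C_eq by simp
lemma finC: "finite C" using C_eq by simp

lemma graphH: "is_graph_on (ext_vertices P) H"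
  unfolding is_graph_on_def
proof
  fix e assume "e \<in> H"
  then consider (a) x k where "e = {None, Some (x,k)}" "{Some x, None} \<in> F" "k \<in> C"
    | (b) x k r where "e = {Some (x, k), Some (x, r)}" "{Some x, None} \<in> F" "k \<in> C" "r \<in> C" "k \<noteq> r"
    | (c) x y k r where "e = {Some (x, k), Some (y, r)}" "{Some x, Some y} \<in> F" "x \<in> carrier G" "y \<in> carrier G" "k \<in> C" "r \<in> C"
    unfolding HH_def by blast
  then show "\<exists>u v. u \<in> ext_vertices P \<and> v \<in> ext_vertices P \<and> u \<noteq> v \<and> e = {u, v}"
  proof cases
    case a
    then have "x \<in> carrier G" using A_sub unfolding A_def by blast
    with a show ?thesis unfolding VP by blast
  next
    case b
    then have "x \<in> carrier G" using A_sub unfolding A_def by blast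
    with b show ?thesis unfolding VP by blast
  next
    case c
    then have "x \<noteq> y" using F_edge by blast
    with c show ?thesis unfolding VP by blast
  qed
qed

lemma nbH_None: "{v. {None,v} \<in> H} = Some ` (A \<times> C)"
proof (rule Set.set_eqI)
  fix v show "v \<in> {v. {None,v} \<in> H} \<longleftrightarrow> v \<in> Some ` (A \<times> C)"
  proof (cases v)
    case None then show ?thesis using H_NN by auto
  next
    case (Some p) then show ?thesis using H_NS by (cases p) auto
  qed
qed

lemma nbH_Some: "{v. {Some (x,k),v} \<in> H} = (if x \<in> A \<and> k \<in> C then insert None (Some ` ({x} \<times> (C - {k}))) else {}) \<union> (if k \<in> C then Some ` (N x \<times> C) else {})"
proof (rule Set.set_eqI)
  fix v show "v \<in> {v. {Some (x,k),v} \<in> H} \<longleftrightarrow> v \<in> (if x \<in> A \<and> k \<in> C then insert None (Some ` ({x} \<times> (C - {k}))) else {}) \<union> (if k \<in> C then Some ` (N x \<times> C) else {})"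
  proof (cases v)
    case None then show ?thesis using H_SN by auto
  next
    case (Some p) then show ?thesis using H_SS by (cases p) auto
  qed
qed

lemma degH: "u \<in> ext_vertices P \<Longrightarrow> card {v. {u,v} \<in> H} = 2 * n"
proof -
  assume "u \<in> ext_vertices P"
  then consider "u = None" | x k where "u = Some (x,k)" "x \<in> carrier G" "k \<in> C" unfolding VP by blast
  then show ?thesis
  proof cases
    case 1
    then show ?thesis using cardA cardC by (simp add: nbH_None card_image card_cartesian_product)
  next
    case 2
    have fY: "finite (N x \<times> C)" using finN finC by simp
    show ?thesis
    proof (cases "x \<in> A")
      case True
      have "{v. {u,v} \<in> H} = insert None (Some ` ({x} \<times> (C - {k}) \<union> N x \<times> C))"
        using 2 True by (auto simp: nbH_Some)
      moreover have "card ({x} \<times> (C - {k}) \<union> N x \<times> C) = card ({x} \<times> (C - {k})) + card (N x \<times> C)"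
        using N_not finC fY by (intro card_Un_disjoint) auto
      moreover have "card ({x} \<times> (C - {k})) = n - 1" using cardC 2 finC by (simp add: card_cartesian_product)
      moreover have "card (N x \<times> C) = n" using cardN[OF 2(2)] True cardC by (simp add: card_cartesian_product)
      ultimately show ?thesis using n1 finC fY by (simp add: card_image)
    next
      case False
      have "{v. {u,v} \<in> H} = Some ` (N x \<times> C)"
        using 2 False by (auto simp: nbH_Some)
      then show ?thesis using cardN[OF 2(2)] False cardC by (simp add: card_image card_cartesian_product)
    qed
  qed
qed

lemma factorH: "is_k_factor (ext_vertices P) (2 * n) H"
  unfolding is_k_factor_def using graphH degH by blast


lemma grpP: "group P" by (rule DirProd_group[OF grp group_integer_mod_group])

lemma vactP_Some: "vact P (Some (x,k)) (g,t) = Some (x \<otimes>\<^bsub>G\<^esub> g, (k+t) mod int n)"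
  by (simp add: vact_def)
lemma vactP_None: "vact P None p = None" by (simp add: vact_def)
lemma vactG_Some: "vact G (Some x) g = Some (x \<otimes>\<^bsub>G\<^esub> g)" by (simp add: vact_def)
lemma vactG_None: "vact G None g = None" by (simp add: vact_def)

lemma modC: "(k + t) mod int n \<in> C" using C_eq n1 by simp

lemma Fcl:
  assumes "gact G F g \<subseteq> F"
  shows "x \<in> A \<Longrightarrow> x \<otimes>\<^bsub>G\<^esub> g \<in> A" and "y \<in> N x \<Longrightarrow> y \<otimes>\<^bsub>G\<^esub> g \<in> N (x \<otimes>\<^bsub>G\<^esub> g)"
proof -
  have h: "\<And>u v. {u,v} \<in> F \<Longrightarrow> {vact G u g, vact G v g} \<in> F"
    using assms gact_sub_iff[OF graphF] by blast
  show "x \<in> A \<Longrightarrow> x \<otimes>\<^bsub>G\<^esub> g \<in> A"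
    using h[of "Some x" None] unfolding A_def by (simp add: vactG_Some vactG_None)
  show "y \<in> N x \<Longrightarrow> y \<otimes>\<^bsub>G\<^esub> g \<in> N (x \<otimes>\<^bsub>G\<^esub> g)"
    using h[of "Some x" "Some y"] unfolding N_def by (simp add: vactG_Some)
qed

lemma L1:
  assumes "gact G F g \<subseteq> F" "t \<in> C"
  shows "gact P H (g,t) \<subseteq> H"
  unfolding gact_sub_iff[OF graphH]
proof (intro allI impI)
  fix u v assume uv: "{u,v} \<in> H"
  show "{vact P u (g,t), vact P v (g,t)} \<in> H"
  proof (cases u)
    case None
    show ?thesis
    proof (cases v)
      case None
      then show ?thesis using uv \<open>u = None\<close> H_NN by simp
    next
      case (Some q)
      obtain y r where q: "q = (y,r)" by (cases q)
      have "y \<in> A" using uv None Some q H_NS by simp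
      then have "y \<otimes>\<^bsub>G\<^esub> g \<in> A" by (rule Fcl(1)[OF assms(1)])
      then have "{None, Some (y \<otimes>\<^bsub>G\<^esub> g, (r+t) mod int n)} \<in> H" using H_NS modC by simp
      then show ?thesis using None Some q by (simp add: vactP_Some vactP_None)
    qed
  next
    case (Some p)
    obtain x k where p: "p = (x,k)" by (cases p)
    show ?thesis
    proof (cases v)
      case None
      have "x \<in> A" using uv None Some p H_SN by simp
      then have "x \<otimes>\<^bsub>G\<^esub> g \<in> A" by (rule Fcl(1)[OF assms(1)])
      then have "{Some (x \<otimes>\<^bsub>G\<^esub> g, (k+t) mod int n), None} \<in> H" using H_SN modC by simp
      then show ?thesis using None Some p by (simp add: vactP_Some vactP_None)
    next
      case (Some q)
      obtain y r where q: "q = (y,r)" by (cases q)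
      have h: "k \<in> C \<and> r \<in> C \<and> ((x = y \<and> x \<in> A \<and> k \<noteq> r) \<or> y \<in> N x)"
        using uv \<open>u = Some p\<close> p Some q H_SS by simp
      have "(k + t) mod int n \<noteq> (r + t) mod int n" if "k \<noteq> r"
        using modc[of k n r t] h that C_eq by auto
      moreover have "y \<in> N x \<Longrightarrow> y \<otimes>\<^bsub>G\<^esub> g \<in> N (x \<otimes>\<^bsub>G\<^esub> g)" by (rule Fcl(2)[OF assms(1)])
      moreover have "x \<in> A \<Longrightarrow> x \<otimes>\<^bsub>G\<^esub> g \<in> A" by (rule Fcl(1)[OF assms(1)])
      ultimately have "(k + t) mod int n \<in> C \<and> (r + t) mod int n \<in> C \<and> ((x \<otimes>\<^bsub>G\<^esub> g = y \<otimes>\<^bsub>G\<^esub> g \<and> x \<otimes>\<^bsub>G\<^esub> g \<in> A \<and> (k + t) mod int n \<noteq> (r + t) mod int n) \<or> y \<otimes>\<^bsub>G\<^esub> g \<in> N (x \<otimes>\<^bsub>G\<^esub> g))"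
        using h modC by metis
      then have "{Some (x \<otimes>\<^bsub>G\<^esub> g, (k + t) mod int n), Some (y \<otimes>\<^bsub>G\<^esub> g, (r + t) mod int n)} \<in> H"
        by (simp only: H_SS)
      then show ?thesis using \<open>u = Some p\<close> p Some q by (simp add: vactP_Some)
    qed
  qed
qed

lemma L2:
  assumes "gact P H (g,t) \<subseteq> H"
  shows "gact G F g \<subseteq> F"
  unfolding gact_sub_iff[OF graphF]
proof (intro allI impI)
  have h: "\<And>u v. {u,v} \<in> H \<Longrightarrow> {vact P u (g,t), vact P v (g,t)} \<in> H"
    using assms gact_sub_iff[OF graphH] by blast
  have z: "0 \<in> C" by simp
  fix u v assume uv: "{u,v} \<in> F"
  show "{vact G u g, vact G v g} \<in> F"
  proof (cases u)
    case None
    show ?thesis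
    proof (cases v)
      case None
      then show ?thesis using uv \<open>u = None\<close> F_edge[of None None] by simp
    next
      case (Some y)
      have "y \<in> A" using uv None Some unfolding A_def by (simp add: insert_commute)
      then have "{None, Some (y,0)} \<in> H" using H_NS z by blast
      from h[OF this] have "y \<otimes>\<^bsub>G\<^esub> g \<in> A" using H_NS by (simp add: vactP_Some vactP_None)
      then show ?thesis using None Some unfolding A_def by (simp add: vactG_Some vactG_None insert_commute)
    qed
  next
    case (Some x)
    show ?thesis
    proof (cases v)
      case None
      have "x \<in> A" using uv None Some unfolding A_def by simp
      then have "{Some (x,0), None} \<in> H" using H_SN z by blast
      from h[OF this] have "x \<otimes>\<^bsub>G\<^esub> g \<in> A" using H_SN by (simp add: vactP_Some vactP_None)
      then show ?thesis using None Some unfolding A_def by (simp add: vactG_Some vactG_None)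
    next
      case (Some y)
      have "y \<in> N x" using uv Some \<open>u = Some x\<close> unfolding N_def by simp
      then have "{Some (x,0), Some (y,0)} \<in> H" using H_SS z by blast
      from h[OF this] have "y \<otimes>\<^bsub>G\<^esub> g \<in> N (x \<otimes>\<^bsub>G\<^esub> g)" using H_SS by (simp add: vactP_Some)
      then show ?thesis using Some \<open>u = Some x\<close> unfolding N_def by (simp add: vactG_Some)
    qed
  qed
qed

lemma invP: "g \<in> carrier G \<Longrightarrow> t \<in> C \<Longrightarrow> inv\<^bsub>P\<^esub> (g,t) = (inv\<^bsub>G\<^esub> g, inv\<^bsub>integer_mod_group n\<^esub> t)"
  by (rule inv_DirProd[OF grp group_integer_mod_group])

lemma stab: "graph_stabilizer P H = graph_stabilizer G F \<times> C"
proof (intro equalityI subsetI)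
  fix p assume "p \<in> graph_stabilizer P H"
  then obtain g t where p: "p = (g,t)" "g \<in> carrier G" "t \<in> C" "gact P H (g,t) = H"
    by (cases p) (auto simp: graph_stabilizer_def)
  have "gact P H (inv\<^bsub>P\<^esub> (g,t)) = H" using p by (intro gact_inv[OF grpP graphH]) auto
  then have "gact P H (inv\<^bsub>G\<^esub> g, inv\<^bsub>integer_mod_group n\<^esub> t) = H" using invP p by simp
  then have "gact G F (inv\<^bsub>G\<^esub> g) \<subseteq> F" using L2[of "inv\<^bsub>G\<^esub> g" "inv\<^bsub>integer_mod_group n\<^esub> t"] by simp
  moreover have "gact G F g \<subseteq> F" using p L2[of g t] by simp
  ultimately have "gact G F g = F" using p by (intro gact_eq[OF grp graphF]) auto
  then show "p \<in> graph_stabilizer G F \<times> C" using p by (simp add: graph_stabilizer_def)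
next
  fix p assume "p \<in> graph_stabilizer G F \<times> C"
  then obtain g t where p: "p = (g,t)" "g \<in> carrier G" "t \<in> C" "gact G F g = F"
    by (cases p) (auto simp: graph_stabilizer_def)
  have gi: "gact G F (inv\<^bsub>G\<^esub> g) = F" using p by (intro gact_inv[OF grp graphF]) auto
  have ti: "inv\<^bsub>integer_mod_group n\<^esub> t \<in> C" using p(3) C_eq n1 by simp
  have "gact P H (g,t) \<subseteq> H" using p by (intro L1) auto
  moreover have "gact P H (inv\<^bsub>G\<^esub> g, inv\<^bsub>integer_mod_group n\<^esub> t) \<subseteq> H" using gi ti by (intro L1) auto
  ultimately have "gact P H (g,t) = H" using p invP by (intro gact_eq[OF grpP graphH]) auto
  then show "p \<in> graph_stabilizer P H" using p by (simp add: graph_stabilizer_def)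
qed


lemma cardS: "card (graph_stabilizer G F) = 2" using st unfolding is_k_starter_def by blast

lemma cardStab: "card (graph_stabilizer P H) = 2 * n"
  using stab cardS cardC by (simp add: card_cartesian_product)

lemma diffs: "carrier P - {\<one>\<^bsub>P\<^esub>} \<subseteq> differences P H"
proof
  fix p assume p: "p \<in> carrier P - {\<one>\<^bsub>P\<^esub>}"
  then obtain g t where gt: "p = (g,t)" "g \<in> carrier G" "t \<in> C" by (cases p) auto
  have z: "0 \<in> C" by simp
  have tm: "t mod int n = t" using gt(3) C_eq by simp
  show "p \<in> differences P H"
  proof (cases "g = \<one>\<^bsub>G\<^esub>")
    case True
    then have "t \<noteq> 0" using p gt by auto
    have "A \<noteq> {}" using cardA by auto
    then obtain x where x: "x \<in> A" by blast
    then have xc: "x \<in> carrier G" using A_sub by blast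
    have "{Some (x,t), Some (x,0)} \<in> H" using H_SS x gt(3) z \<open>t \<noteq> 0\<close> by simp
    moreover have "(x,t) \<otimes>\<^bsub>P\<^esub> inv\<^bsub>P\<^esub> (x,0) = p"
      using invP[OF xc z] gt True tm xc group.r_inv[OF grp] by simp
    ultimately show ?thesis unfolding differences_def using \<open>t \<noteq> 0\<close> by fastforce
  next
    case False
    then have "g \<in> differences G F" using gt st unfolding is_k_starter_def by blast
    then obtain a b where ab: "g = a \<otimes>\<^bsub>G\<^esub> inv\<^bsub>G\<^esub> b" "{Some a, Some b} \<in> F" "a \<noteq> b"
      unfolding differences_def by blast
    then have bN: "b \<in> N a" unfolding N_def by simp
    then have bc: "b \<in> carrier G" using N_sub by blast
    have "{Some (a,t), Some (b,0)} \<in> H" using H_SS bN gt(3) z by simp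
    moreover have "(a,t) \<otimes>\<^bsub>P\<^esub> inv\<^bsub>P\<^esub> (b,0) = p"
      using invP[OF bc z] gt ab tm by simp
    ultimately show ?thesis unfolding differences_def using ab(3) by fastforce
  qed
qed

lemma starterH: "is_k_starter P (2 * n) H"
  unfolding is_k_starter_def
proof (intro conjI)
  show "group P" by (rule grpP)
  show "finite (carrier P)" using fin finC by simp
  have "2 dvd card (carrier G)" using st unfolding is_k_starter_def by blast
  then show "2 * n dvd card (carrier P)" using cardC by (simp add: card_cartesian_product)
  show "is_k_factor (ext_vertices P) (2 * n) H" by (rule factorH)
  show "card (graph_stabilizer P H) = 2 * n" by (rule cardStab)
  show "carrier P - {\<one>\<^bsub>P\<^esub>} \<subseteq> differences P H" by (rule diffs)
qed

end

theorem mainTheorem7: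
  fixes G :: "('a, 'm) monoid_scheme" and n :: nat and F :: "'a option set set"
    and S :: "'a set" and H :: "('a \<times> int) option set set"
  assumes "group G" and "finite (carrier G)" and "n \<ge> 1"
    and "is_k_starter G 2 F"
    and "S = graph_stabilizer G F"
    and "H =
      {{None, Some (x, k)} | x k. {Some x, None} \<in> F \<and> k \<in> carrier (integer_mod_group n)}
      \<union> {{Some (x, k), Some (x, r)} | x k r. {Some x, None} \<in> F \<and>
           k \<in> carrier (integer_mod_group n) \<and> r \<in> carrier (integer_mod_group n) \<and> k \<noteq> r}
      \<union> {{Some (x, k), Some (y, r)} | x y k r. {Some x, Some y} \<in> F \<and>
           x \<in> carrier G \<and> y \<in> carrier G \<and>
           k \<in> carrier (integer_mod_group n) \<and> r \<in> carrier (integer_mod_group n)}"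
  shows "is_k_factor (ext_vertices (G \<times>\<times> integer_mod_group n)) (2 * n) H
    \<and> graph_stabilizer (G \<times>\<times> integer_mod_group n) H = S \<times> carrier (integer_mod_group n)
    \<and> is_k_starter (G \<times>\<times> integer_mod_group n) (2 * n) H"
proof -
  interpret T7 G n F by (rule T7.intro[OF assms(1-4)])
  have HH: "H = HH G n F" using assms(6) by (simp only: HH_def)
  show ?thesis unfolding HH assms(5) using factorH stab starterH by blast
qed

end
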